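(* Let $R$ be a commutative ring with nonzero identity and $\delta$ an expansion of ideals of $R$ with $\delta(\{0\})=\{0\}$. Then $R$ is a field if and only if $R$ is a von Neumann regular ring and $\{0\}$ is a $\delta$-$n$-ideal of $R$.
   Context: An expansion of ideals of a ring $R$ is a map $\delta$ from the set of ideals of $R$ to itself such that $I\subseteq\delta(I)$ for every ideal $I$, and $\delta(I)\subseteq\delta(J)$ whenever $I\subseteq J$. $\sqrt{0}$ denotes the nilradical of $R$. Given an expansion $\delta$, a proper ideal $I$ of $R$ is a $\delta$-$n$-ideal if whenever $a,b\in R$ with $ab\in I$ and $a\notin\sqrt{0}$, then $b\in\delta(I)$. $R$ is von Neumann regular if for every $a\in R$ there is $x\in R$ with $a=a^2x$. *)

theory Defs
  imports "HOL-Algebra.Algebra"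
begin

definition nilradical :: "('a, 'b) ring_scheme \<Rightarrow> 'a set" where
  "nilradical R = {a \<in> carrier R. \<exists>n::nat. a [^]\<^bsub>R\<^esub> n = \<zero>\<^bsub>R\<^esub>}"

definition expansion_of_ideals :: "('a, 'b) ring_scheme \<Rightarrow> ('a set \<Rightarrow> 'a set) \<Rightarrow> bool" where
  "expansion_of_ideals R \<delta> \<longleftrightarrow>
     (\<forall>I. ideal I R \<longrightarrow> ideal (\<delta> I) R \<and> I \<subseteq> \<delta> I) \<and>
     (\<forall>I J. ideal I R \<longrightarrow> ideal J R \<longrightarrow> I \<subseteq> J \<longrightarrow> \<delta> I \<subseteq> \<delta> J)"

definition delta_n_ideal :: "('a, 'b) ring_scheme \<Rightarrow> ('a set \<Rightarrow> 'a set) \<Rightarrow> 'a set \<Rightarrow> bool" where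
  "delta_n_ideal R \<delta> I \<longleftrightarrow> ideal I R \<and> I \<noteq> carrier R \<and>
     (\<forall>a \<in> carrier R. \<forall>b \<in> carrier R.
        a \<otimes>\<^bsub>R\<^esub> b \<in> I \<longrightarrow> a \<notin> nilradical R \<longrightarrow> b \<in> \<delta> I)"

definition von_neumann_regular :: "('a, 'b) ring_scheme \<Rightarrow> bool" where
  "von_neumann_regular R \<longleftrightarrow>
     (\<forall>a \<in> carrier R. \<exists>x \<in> carrier R. a = (a \<otimes>\<^bsub>R\<^esub> a) \<otimes>\<^bsub>R\<^esub> x)"

end

theory Submission
  imports Defs
begin

lemma vnr_pow:
  fixes R (structure)
  assumes "cring R" "a \<in> carrier R" "x \<in> carrier R" "a = (a \<otimes>\<^bsub>R\<^esub> a) \<otimes>\<^bsub>R\<^esub> x"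
  shows "a = a [^]\<^bsub>R\<^esub> (Suc k) \<otimes>\<^bsub>R\<^esub> x [^]\<^bsub>R\<^esub> k"
proof (induction k)
  case 0
  interpret cring R by fact
  show ?case using assms by simp
next
  case (Suc k)
  interpret cring R by fact
  have "a [^] Suc (Suc k) \<otimes> x [^] Suc k = (a [^] Suc k \<otimes> x [^] k) \<otimes> (a \<otimes> x)"
    using assms by (simp add: m_ac)
  also have "\<dots> = a \<otimes> (a \<otimes> x)" using Suc by simp
  also have "\<dots> = a" using assms(2-4) by (simp add: m_assoc)
  finally show ?case by simp
qed

theorem theorem2p10:
  fixes R (structure) and \<delta> :: "'a set \<Rightarrow> 'a set"
  assumes "cring R"
    and "\<one>\<^bsub>R\<^esub> \<noteq> \<zero>\<^bsub>R\<^esub>"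
    and "expansion_of_ideals R \<delta>"
    and "\<delta> {\<zero>\<^bsub>R\<^esub>} = {\<zero>\<^bsub>R\<^esub>}"
  shows "field R \<longleftrightarrow> von_neumann_regular R \<and> delta_n_ideal R \<delta> {\<zero>\<^bsub>R\<^esub>}"
proof
  interpret cring R by fact
  assume F: "field R"
  interpret field R by fact
  have "von_neumann_regular R"
    unfolding von_neumann_regular_def
  proof
    fix a assume a: "a \<in> carrier R"
    show "\<exists>x\<in>carrier R. a = a \<otimes> a \<otimes> x"
    proof (cases "a = \<zero>")
      case True thus ?thesis using a by auto
    next
      case False
      hence u: "a \<in> Units R" using a field_Units by auto
      have "a \<otimes> a \<otimes> inv a = a" using u a by (simp add: m_assoc)
      thus ?thesis using u by (metis Units_inv_closed)
    qed
  qed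
  moreover have "delta_n_ideal R \<delta> {\<zero>}"
    unfolding delta_n_ideal_def
  proof (intro conjI ballI impI)
    show "ideal {\<zero>} R" by (rule zeroideal)
    show "{\<zero>} \<noteq> carrier R" using assms(2) one_closed by blast
    fix a b assume ab: "a \<in> carrier R" "b \<in> carrier R" "a \<otimes> b \<in> {\<zero>}" "a \<notin> nilradical R"
    have "a \<noteq> \<zero>" using ab(4) unfolding nilradical_def
      using ab(1) by (metis (mono_tags, lifting) mem_Collect_eq nat_pow_eone)
    hence "b = \<zero>" using ab integral by auto
    thus "b \<in> \<delta> {\<zero>}" using assms(4) by simp
  qed
  ultimately show "von_neumann_regular R \<and> delta_n_ideal R \<delta> {\<zero>}" by simp
next
  interpret cring R by fact
  assume H: "von_neumann_regular R \<and> delta_n_ideal R \<delta> {\<zero>}"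
  show "field R"
  proof (rule field_intro2)
    show "\<zero> \<noteq> \<one>" using assms(2) by auto
    fix a assume "a \<in> carrier R - {\<zero>}"
    hence a: "a \<in> carrier R" "a \<noteq> \<zero>" by auto
    obtain x where x: "x \<in> carrier R" "a = a \<otimes> a \<otimes> x"
      using H a unfolding von_neumann_regular_def by blast
    have nn: "a \<notin> nilradical R"
    proof
      assume "a \<in> nilradical R"
      then obtain n where n: "a [^] (n::nat) = \<zero>" unfolding nilradical_def by auto
      show False
      proof (cases n)
        case 0 thus ?thesis using n assms(2) by simp
      next
        case (Suc k)
        have "a = a [^] (Suc k) \<otimes> x [^] k" using vnr_pow[OF assms(1) a(1) x(1) x(2)] .
        thus False using n Suc a x by simp
      qed
    qed
    have "a \<otimes> (\<one> \<ominus> a \<otimes> x) = a \<ominus> a \<otimes> a \<otimes> x"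
      using a x by (simp add: r_distr r_minus minus_eq m_assoc)
    also have "\<dots> = \<zero>" using x a by (metis r_neg minus_eq)
    finally have "a \<otimes> (\<one> \<ominus> a \<otimes> x) \<in> {\<zero>}" by simp
    hence "\<one> \<ominus> a \<otimes> x \<in> \<delta> {\<zero>}"
      using H nn a x unfolding delta_n_ideal_def by blast
    hence "\<one> \<ominus> a \<otimes> x = \<zero>" using assms(4) by simp
    hence "a \<otimes> x = \<one>" using a x
      by (metis m_closed one_closed r_right_minus_eq)
    thus "a \<in> Units R" using a x unfolding Units_def by (metis (mono_tags, lifting) m_comm mem_Collect_eq)
  qed
qed

end
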